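(* Let $\Delta_n$ ($n\ge 0$) be as defined in the context. Then, as an identity of power series (convergent in a neighborhood of $t=0$), $$f(t):=\sum_{n\ge 0}\Delta_n (2t)^n=\frac12\,\frac{1}{\sqrt{(1-t)(1-2t)(2t^2+t+1)}}-\frac12\,\frac{1}{1-t},$$ where the square root is the branch equal to $1$ at $t=0$.
   Context: A fair coin is flipped $n$ times, producing a sequence $x_1,\dots,x_n\in\{H,T\}$ of independent uniformly random outcomes. Alice's score is the number of indices $i\in\{1,\dots,n-1\}$ with $(x_i,x_{i+1})=(H,H)$; Bob's score is the number of indices $i\in\{1,\dots,n-1\}$ with $(x_i,x_{i+1})=(H,T)$. Let $P_n(\mathrm{Bob})$ be the probability that Bob's score is strictly larger than Alice's, $P_n(\mathrm{Alice})$ the probability that Alice's score is strictly larger than Bob's, and $\Delta_n=P_n(\mathrm{Bob})-P_n(\mathrm{Alice})$ (so $\Delta_0=0$). *)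

theory Defs
  imports Complex_Main
begin

text \<open>Coin sequences are boolean lists; True = H, False = T. Positions are 0-based,
  so index i (0-based) with i+1 < length xs corresponds to the paper's index i+1 in {1..n-1}.\<close>

definition alice_score :: "bool list \<Rightarrow> nat" where
  "alice_score xs = card {i. i + 1 < length xs \<and> xs ! i \<and> xs ! (i+1)}"

definition bob_score :: "bool list \<Rightarrow> nat" where
  "bob_score xs = card {i. i + 1 < length xs \<and> xs ! i \<and> \<not> xs ! (i+1)}"

definition P_bob :: "nat \<Rightarrow> real" where
  "P_bob n = real (card {xs :: bool list. length xs = n \<and> alice_score xs < bob_score xs}) / 2 ^ n"

definition P_alice :: "nat \<Rightarrow> real" where
  "P_alice n = real (card {xs :: bool list. length xs = n \<and> bob_score xs < alice_score xs}) / 2 ^ n"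

definition Delta :: "nat \<Rightarrow> real" where
  "Delta n = P_bob n - P_alice n"

end

theory Submission
  imports Defs "HOL-Analysis.FPS_Convergence"
begin


definition cntp :: "(bool \<Rightarrow> bool \<Rightarrow> bool) \<Rightarrow> bool list \<Rightarrow> nat" where
  "cntp P xs = card {i. i + 1 < length xs \<and> P (xs ! i) (xs ! (i+1))}"

lemma cntp_Nil[simp]: "cntp P [] = 0" by (simp add: cntp_def)
lemma cntp_single[simp]: "cntp P [x] = 0" by (simp add: cntp_def)

lemma cntp_Cons2: "cntp P (x # y # xs) = (if P x y then 1 else 0) + cntp P (y # xs)"
proof -
  let ?A = "{i. i + 1 < length (y#xs) \<and> P ((y#xs) ! i) ((y#xs) ! (i+1))}"
  have eq: "{i. i + 1 < length (x#y#xs) \<and> P ((x#y#xs) ! i) ((x#y#xs) ! (i+1))}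
      = {i. i = 0 \<and> P x y} \<union> Suc ` ?A"
  proof (rule set_eqI)
    fix i show "i \<in> {i. i + 1 < length (x#y#xs) \<and> P ((x#y#xs) ! i) ((x#y#xs) ! (i+1))} \<longleftrightarrow> i \<in> {i. i = 0 \<and> P x y} \<union> Suc ` ?A"
      by (cases i) auto
  qed
  have fin: "finite ?A" by (rule finite_subset[of _ "{..<length (y#xs)}"]) auto
  have "card ({i. i = 0 \<and> P x y} \<union> Suc ` ?A) = card {i::nat. i = 0 \<and> P x y} + card (Suc ` ?A)"
  proof -
    have disj: "{i. i = 0 \<and> P x y} \<inter> Suc ` ?A = {}" by auto
    have f1: "finite {i::nat. i = 0 \<and> P x y}" by (rule finite_subset[of _ "{0}"]) auto
    have f2: "finite (Suc ` ?A)" using fin by simp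
    show ?thesis using card_Un_disjoint[OF f1 f2 disj] by simp
  qed
  also have "card (Suc ` ?A) = card ?A" by (simp add: card_image)
  also have "card {i::nat. i = 0 \<and> P x y} = (if P x y then 1 else 0)" by auto
  finally show ?thesis unfolding cntp_def eq by simp
qed

definition sc :: "bool list \<Rightarrow> int" where
  "sc xs = int (bob_score xs) - int (alice_score xs)"

lemma sc_alt: "sc xs = int (cntp (\<lambda>a b. a \<and> \<not> b) xs) - int (cntp (\<lambda>a b. a \<and> b) xs)"
  by (simp add: sc_def cntp_def bob_score_def alice_score_def)

lemma sc_Nil[simp]: "sc [] = 0" by (simp add: sc_alt)
lemma sc_single[simp]: "sc [x] = 0" by (simp add: sc_alt)
lemma sc_Cons2[simp]: "sc (x # y # xs) = sc (y # xs) + (if x then (if y then -1 else 1) else 0)"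
  by (simp add: sc_alt cntp_Cons2)

lemma sc_bound: "\<bar>sc xs\<bar> \<le> int (length xs)"
  by (induction xs rule: induct_list012) auto

definition L :: "nat \<Rightarrow> bool list set" where "L n = {xs. length xs = n}"

lemma finite_L[simp]: "finite (L n)"
  using finite_lists_length_eq[of "UNIV::bool set" n] by (simp add: L_def)

lemma card_L: "card (L n) = 2 ^ n"
  using card_lists_length_eq[of "UNIV::bool set" n] by (simp add: L_def)

lemma L_Suc: "L (Suc n) = (\<lambda>(b,ys). b # ys) ` (UNIV \<times> L n)"
  by (auto simp: L_def length_Suc_conv image_iff)

lemma sum_L_Suc: "(\<Sum>xs\<in>L (Suc n). f xs) = (\<Sum>ys\<in>L n. f (True # ys)) + (\<Sum>ys\<in>L n. f (False # ys))"
proof -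
  have inj: "inj_on (\<lambda>(b,ys). b # ys) (UNIV \<times> L n)" by (auto simp: inj_on_def)
  have "(\<Sum>xs\<in>L (Suc n). f xs) = (\<Sum>p\<in>UNIV \<times> L n. f ((\<lambda>(b,ys). b # ys) p))"
    unfolding L_Suc by (rule sum.reindex[OF inj, unfolded comp_def])
  also have "\<dots> = (\<Sum>b\<in>UNIV. \<Sum>ys\<in>L n. f (b # ys))"
    by (simp add: sum.cartesian_product split_def)
  also have "\<dots> = (\<Sum>ys\<in>L n. f (True # ys)) + (\<Sum>ys\<in>L n. f (False # ys))"
    by (simp add: UNIV_bool add.commute)
  finally show ?thesis .
qed

lemma L_0: "L 0 = {[]}" by (auto simp: L_def)

definition cnt :: "bool \<Rightarrow> nat \<Rightarrow> int \<Rightarrow> real" where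
  "cnt b n k = (\<Sum>xs\<in>L n. if xs \<noteq> [] \<and> hd xs = b \<and> sc xs = k then 1 else 0)"

lemma cnt_0: "cnt b 0 k = 0" by (simp add: cnt_def L_0)

lemma sc_Cons: "sc (x # ys) = sc ys + (if x \<and> ys \<noteq> [] then (if hd ys then -1 else 1) else 0)"
  by (cases ys) auto

lemma cnt_Suc_False: "cnt False (Suc n) k = (if n = 0 \<and> k = 0 then 1 else 0) + cnt False n k + cnt True n k"
proof -
  have "cnt False (Suc n) k = (\<Sum>ys\<in>L n. if sc ys = k then 1 else 0)"
    unfolding cnt_def sum_L_Suc by (simp add: sc_Cons)
  also have "\<dots> = (\<Sum>ys\<in>L n. (if ys = [] \<and> k = 0 then 1 else 0) + (if ys \<noteq> [] \<and> hd ys = False \<and> sc ys = k then 1 else 0)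
        + (if ys \<noteq> [] \<and> hd ys = True \<and> sc ys = k then 1 else 0))"
    by (rule sum.cong) auto
  also have "\<dots> = (\<Sum>ys\<in>L n. (if ys = [] \<and> k = 0 then 1 else 0)) + cnt False n k + cnt True n k"
    by (simp add: sum.distrib cnt_def)
  also have "(\<Sum>ys\<in>L n. (if ys = [] \<and> k = 0 then 1 else 0::real)) = (if n = 0 \<and> k = 0 then 1 else 0)"
    by (cases n) (auto simp: L_def intro!: sum.neutral)
  finally show ?thesis .
qed

lemma cnt_Suc_True: "cnt True (Suc n) k = (if n = 0 \<and> k = 0 then 1 else 0) + cnt False n (k - 1) + cnt True n (k + 1)"
proof -
  have "cnt True (Suc n) k = (\<Sum>ys\<in>L n. if sc (True # ys) = k then 1 else 0)"
    unfolding cnt_def sum_L_Suc by simp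
  also have "\<dots> = (\<Sum>ys\<in>L n. (if ys = [] \<and> k = 0 then 1 else 0) + (if ys \<noteq> [] \<and> hd ys = False \<and> sc ys = k - 1 then 1 else 0)
        + (if ys \<noteq> [] \<and> hd ys = True \<and> sc ys = k + 1 then 1 else 0))"
    by (rule sum.cong) (auto simp: sc_Cons)
  also have "\<dots> = (\<Sum>ys\<in>L n. (if ys = [] \<and> k = 0 then 1 else 0)) + cnt False n (k - 1) + cnt True n (k + 1)"
    by (simp add: sum.distrib cnt_def)
  also have "(\<Sum>ys\<in>L n. (if ys = [] \<and> k = 0 then 1 else 0::real)) = (if n = 0 \<and> k = 0 then 1 else 0)"
    by (cases n) (auto simp: L_def intro!: sum.neutral)
  finally show ?thesis .
qed

definition sgs :: "nat \<Rightarrow> real" where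
  "sgs n = (\<Sum>xs\<in>L n. of_int (sgn (sc xs)))"

lemma Delta_sgs: "Delta n * 2 ^ n = sgs n"
proof -
  have c: "real (card {xs. length xs = n \<and> P xs}) = (\<Sum>xs\<in>L n. if P xs then 1 else 0)" for P
  proof -
    have "{xs. length xs = n \<and> P xs} = {xs\<in>L n. P xs}" by (auto simp: L_def)
    hence "real (card {xs. length xs = n \<and> P xs}) = (\<Sum>xs\<in>{xs\<in>L n. P xs}. 1)" by simp
    also have "\<dots> = (\<Sum>xs\<in>L n. if P xs then 1 else 0)" by (rule sum.inter_filter) simp
    finally show ?thesis .
  qed
  have "Delta n * 2 ^ n = (\<Sum>xs\<in>L n. if alice_score xs < bob_score xs then 1 else 0)
      - (\<Sum>xs\<in>L n. if bob_score xs < alice_score xs then 1 else 0)"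
    by (simp add: Delta_def P_bob_def P_alice_def c[symmetric] field_simps)
  also have "\<dots> = sgs n" unfolding sgs_def sum_subtractf[symmetric]
    by (rule sum.cong) (auto simp: sc_def sgn_if)
  finally show ?thesis .
qed

lemma sgs_cnt: "sgs n = (\<Sum>k\<in>{-int n..int n}. of_int (sgn k) * (cnt False n k + cnt True n k))"
proof -
  have "sgs n = (\<Sum>xs\<in>L n. \<Sum>k\<in>{-int n..int n}. of_int (sgn k) * ((if xs \<noteq> [] \<and> hd xs = False \<and> sc xs = k then 1 else 0)
       + (if xs \<noteq> [] \<and> hd xs = True \<and> sc xs = k then 1 else 0)))"
    unfolding sgs_def
  proof (rule sum.cong[OF refl])
    fix xs assume "xs \<in> L n"
    hence "sc xs \<in> {-int n..int n}" using sc_bound[of xs] by (auto simp: L_def)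
    have "of_int (sgn (sc xs)) = (\<Sum>k\<in>{-int n..int n}. if k = sc xs then of_int (sgn k) * (if xs \<noteq> [] then 1 else 0) else (0::real))"
      using \<open>sc xs \<in> _\<close> by (cases xs) auto
    also have "\<dots> = (\<Sum>k\<in>{-int n..int n}. of_int (sgn k) * ((if xs \<noteq> [] \<and> hd xs = False \<and> sc xs = k then 1 else 0)
       + (if xs \<noteq> [] \<and> hd xs = True \<and> sc xs = k then 1 else 0)))"
      by (rule sum.cong) auto
    finally show "(of_int (sgn (sc xs))::real) = (\<Sum>k\<in>{-int n..int n}. of_int (sgn k) * ((if xs \<noteq> [] \<and> hd xs = False \<and> sc xs = k then 1 else 0)
       + (if xs \<noteq> [] \<and> hd xs = True \<and> sc xs = k then 1 else 0)))" .
  qed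
  also have "\<dots> = (\<Sum>k\<in>{-int n..int n}. of_int (sgn k) * (cnt False n k + cnt True n k))"
    unfolding cnt_def by (subst sum.swap) (rule sum.cong[OF refl], simp add: sum_distrib_left sum.distrib distrib_left)
  finally show ?thesis .
qed



abbreviation XX :: "real fps" where "XX \<equiv> fps_X"

definition i1 :: "real fps" where "i1 = inverse (1 - XX)"
lemma i1: "i1 * (1 - XX) = 1" unfolding i1_def by (rule inverse_mult_eq_1) simp

definition RR :: "real fps" where "RR = 1 - 4 * XX^3 * i1"
definition VV :: "real fps" where "VV = fps_radical (\<lambda>_ _. 1) 2 RR"

lemma RR0: "fps_nth RR 0 = 1" by (simp add: RR_def fps_mult_nth)
lemma RR1: "fps_nth RR 1 = 0" by (simp add: RR_def fps_mult_nth)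

lemma VV2: "VV ^ 2 = RR"
  using power_radical[of RR "\<lambda>_ _. 1" 1] RR0 by (simp add: VV_def power2_eq_square eval_nat_numeral)

lemma VV0: "fps_nth VV 0 = 1" by (simp add: VV_def)

lemma VV1: "fps_nth VV 1 = 0"
proof -
  have "fps_nth (VV * VV) 1 = 2 * fps_nth VV 1" by (simp add: fps_mult_nth VV0)
  moreover have "fps_nth (VV * VV) 1 = 0" using VV2 RR1 by (simp add: power2_eq_square)
  ultimately show ?thesis by linarith
qed

definition uu :: "real fps" where "uu = fps_const (1/2) * fps_shift 2 (1 - VV)"

lemma VV_uu: "VV = 1 - 2 * XX^2 * uu"
proof -
  have A: "1 - VV = XX^2 * fps_shift 2 (1 - VV)"
  proof (rule fps_ext)
    fix m show "fps_nth (1 - VV) m = fps_nth (XX^2 * fps_shift 2 (1 - VV)) m"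
      using VV0 VV1 by (cases m; cases "m - 1") (auto simp: fps_X_power_mult_nth)
  qed
  have B: "2 * XX^2 * uu = XX^2 * fps_shift 2 (1 - VV)"
    by (simp add: uu_def numeral_fps_const mult.assoc[symmetric] fps_const_mult[symmetric])
  have "VV = 1 - (1 - VV)" by simp
  also have "\<dots> = 1 - XX^2 * fps_shift 2 (1 - VV)" by (rule arg_cong[where f="\<lambda>z. 1 - z"], rule A)
  also have "\<dots> = 1 - 2 * XX^2 * uu" by (simp only: B)
  finally show ?thesis .
qed

lemma uu_eq: "uu = XX * i1 + XX^2 * uu^2"
proof -
  have "(1 - 2 * XX^2 * uu)^2 = 1 - 4 * XX^3 * i1" using VV2 VV_uu RR_def by simp
  hence "XX^2 * (4 * (uu - XX * i1 - XX^2 * uu^2)) = 0"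
    by (simp add: algebra_simps power2_eq_square power3_eq_cube)
  hence "4 * (uu - XX * i1 - XX^2 * uu^2) = 0" by (simp only: mult_eq_0_iff) simp
  hence "uu - XX * i1 - XX^2 * uu^2 = 0" by (simp only: mult_eq_0_iff) (simp add: numeral_fps_const)
  thus ?thesis by (simp add: algebra_simps)
qed



lemma uu0: "fps_nth uu 0 = 0"
proof -
  have "fps_nth uu 0 = fps_nth (XX * i1 + XX^2 * uu^2) 0" by (subst uu_eq) simp
  thus ?thesis by (simp add: fps_X_power_mult_nth)
qed

definition rho :: "real fps" where "rho = XX * uu"
definition sig :: "real fps" where "sig = (1 - XX) * uu"
definition i2 :: "real fps" where "i2 = inverse (1 - 2 * XX^2 * uu)"
definition del :: "real fps" where "del = XX * (1 + XX * uu) * i2"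

lemma i2: "i2 * (1 - 2 * XX^2 * uu) = 1"
  unfolding i2_def by (rule inverse_mult_eq_1) (simp add: fps_X_power_mult_nth mult.assoc)

lemma rho_eq: "rho = XX^2 * i1 + XX * rho^2"
  using uu_eq unfolding rho_def by algebra

lemma sig_eq: "sig = XX + XX^2 * sig^2 * i1"
proof -
  have "sig = (1 - XX) * (XX * i1 + XX^2 * uu^2)" unfolding sig_def by (subst uu_eq) simp
  thus ?thesis using i1 unfolding sig_def by algebra
qed

definition hh :: "int \<Rightarrow> real fps" where
  "hh k = (if 0 < k then (1 + del) * rho ^ nat k else if k = 0 then del else del * sig ^ nat (-k))"

definition tt :: "int \<Rightarrow> real fps" where
  "tt k = XX * ((if k = 0 then 1 else 0) + hh k) * i1"

lemma tt_eq: "tt k = XX * ((if k = 0 then 1 else 0) + tt k + hh k)"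
  using i1 unfolding tt_def by algebra

lemma del_eq: "del = XX + XX^2 * del * uu + XX^2 * uu + XX^2 * del * uu"
  using i2 unfolding del_def by algebra

lemma aux_pos: "c * (p * rho) = XX * (XX * (c * p) * i1 + c * (p * rho^2))"
  using rho_eq by algebra

lemma aux_neg: "c * (p * sig) = XX * (XX * (c * (p * sig^2)) * i1 + c * p)"
  using sig_eq by algebra

lemma aux_zero: "del = XX * (1 + XX * (del * ((1 - XX) * uu)) * i1 + (1 + del) * (XX * uu))"
  using del_eq i1 by algebra

lemma hh_eq: "hh k = XX * ((if k = 0 then 1 else 0) + tt (k - 1) + hh (k + 1))"
proof -
  consider "k \<ge> 1" | "k = 0" | "k \<le> -1" by linarith
  then show ?thesis
  proof cases
    case 1
    define m where "m = nat (k - 1)"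
    have m: "k = int m + 1" using 1 by (simp add: m_def)
    have e0: "hh k = (1 + del) * rho ^ (m + 1)" "hh (k - 1) = (if m = 0 then del else (1 + del) * rho ^ m)"
       "hh (k + 1) = (1 + del) * rho ^ (m + 2)"
      using m by (auto simp: hh_def nat_add_distrib)
    have e: "hh k = (1 + del) * (rho ^ m * rho)" "hh (k - 1) = (if m = 0 then del else (1 + del) * rho ^ m)"
       "hh (k + 1) = (1 + del) * (rho ^ m * rho^2)"
      unfolding e0 by (simp_all only: power_add power_one_right)
    have t: "tt (k - 1) = XX * ((1 + del) * rho ^ m) * i1" using m e by (auto simp: tt_def)
    show ?thesis unfolding e t using m aux_pos[of "1 + del" "rho ^ m"] by simp
  next
    case 2
    have "hh 0 = del" "hh 1 = (1 + del) * rho" "tt (-1) = XX * (del * sig) * i1"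
      by (auto simp: hh_def tt_def)
    thus ?thesis using 2 aux_zero unfolding rho_def sig_def by simp
  next
    case 3
    define m where "m = nat (- k - 1)"
    have m: "k = - int m - 1" using 3 by (simp add: m_def)
    have e: "hh k = del * (sig ^ m * sig)" "hh (k + 1) = del * sig ^ m" "hh (k - 1) = del * sig ^ (m + 2)"
      using m by (auto simp: hh_def nat_add_distrib power_add)
    have t: "tt (k - 1) = XX * (del * (sig ^ m * sig^2)) * i1" using m e by (simp add: tt_def power_add power2_eq_square)
    show ?thesis unfolding e t using m aux_neg[of del "sig ^ m"] by simp
  qed
qed


lemma cnt_fps: "cnt True n k = fps_nth (hh k) n \<and> cnt False n k = fps_nth (tt k) n"
proof (induction n arbitrary: k)
  case 0
  show ?case by (subst hh_eq, subst tt_eq) (simp add: cnt_0)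
next
  case (Suc n)
  show ?case
    by (subst hh_eq, subst tt_eq) (simp add: cnt_Suc_True cnt_Suc_False Suc.IH)
qed

lemma geo_aux: "(\<Sum>k\<in>{1..n}. r ^ k) * (1 - r) = r - r ^ Suc n" for r :: "real fps"
proof (induction n)
  case 0 thus ?case by simp
next
  case (Suc n)
  have a: "(\<Sum>k\<in>{1..Suc n}. r^k) = (\<Sum>k\<in>{1..n}. r^k) + r ^ Suc n" by simp
  have b: "r ^ Suc (Suc n) = r ^ Suc n * r" by simp
  have c: "\<And>S p. S * (1 - r) = r - p \<Longrightarrow> (S + p) * (1 - r) = r - p * r" by algebra
  show ?case unfolding a b by (rule c[OF Suc.IH])
qed

lemma geo:
  fixes r f :: "real fps"
  assumes r0: "fps_nth r 0 = 0"
  shows "(\<Sum>k\<in>{1..n}. fps_nth (f * r ^ k) n) = fps_nth (f * r * inverse (1 - r)) n"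
proof -
  let ?S = "\<Sum>k\<in>{1..n}. r ^ k"
  have inv: "(1 - r) * inverse (1 - r) = 1" by (rule inverse_mult_eq_1') (simp add: r0)
  have "f * r * inverse (1 - r) = f * (?S * (1 - r) + r ^ Suc n) * inverse (1 - r)"
    by (simp only: geo_aux diff_add_cancel)
  also have "\<dots> = f * ?S + f * r ^ Suc n * inverse (1 - r)"
    using inv by algebra
  finally have eq: "f * r * inverse (1 - r) = f * ?S + f * r ^ Suc n * inverse (1 - r)" .
  have rs: "r = XX * fps_shift 1 r"
  proof (rule fps_ext)
    fix m show "fps_nth r m = fps_nth (XX * fps_shift 1 r) m"
      using r0 by (cases m) (simp_all add: fps_X_mult_nth)
  qed
  have "r ^ Suc n = XX ^ Suc n * (fps_shift 1 r) ^ Suc n"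
    by (subst rs) (simp add: power_mult_distrib)
  hence "fps_nth (f * r ^ Suc n * inverse (1 - r)) n = 0"
    by (simp add: mult.assoc mult.left_commute[of f] fps_X_power_mult_nth)
  thus ?thesis
    by (simp add: eq sum_distrib_left fps_sum_nth)
qed

definition GG :: "real fps" where
  "GG = i1 * (1 + del) * rho * inverse (1 - rho) - i1 * del * sig * inverse (1 - sig)"

lemma rho0: "fps_nth rho 0 = 0" by (simp add: rho_def uu0)
lemma sig0: "fps_nth sig 0 = 0" by (simp add: sig_def fps_mult_nth uu0)

lemma sum_int_sym: "(\<Sum>k\<in>{-int n..int n}. g k) = g 0 + (\<Sum>k\<in>{1..n}. g (int k) + g (- int k))"
proof (induction n)
  case 0 thus ?case by simp
next
  case (Suc n)
  have "{-int (Suc n)..int (Suc n)} = insert (int (Suc n)) (insert (- int (Suc n)) {-int n..int n})" by auto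
  hence "(\<Sum>k\<in>{-int (Suc n)..int (Suc n)}. g k) = g (int (Suc n)) + g (- int (Suc n)) + (\<Sum>k\<in>{-int n..int n}. g k)"
    by (simp add: add.assoc)
  thus ?case using Suc by (simp add: add_ac)
qed

lemma tt_hh_aux: "XX * h * i1 + h = i1 * h"
  using i1 by algebra

lemma tt_hh: "k \<noteq> 0 \<Longrightarrow> tt k + hh k = i1 * hh k"
  unfolding tt_def using tt_hh_aux by simp

lemma sgs_GG: "sgs n = fps_nth GG n"
proof -
  have "sgs n = (\<Sum>k\<in>{1..n}. fps_nth (i1 * (1 + del) * rho ^ k) n - fps_nth (i1 * del * sig ^ k) n)"
    unfolding sgs_cnt sum_int_sym sgn_0 of_int_0 mult_zero_left add_0
  proof (rule sum.cong[OF refl])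
    fix k assume "k \<in> {1..n}"
    hence k: "int k > 0" "int k \<noteq> 0" "- int k \<noteq> 0" by auto
    have "cnt False n (int k) + cnt True n (int k) = fps_nth (i1 * (1 + del) * rho ^ k) n"
      using tt_hh[OF k(2)] k by (simp add: cnt_fps hh_def mult.assoc flip: fps_add_nth)
    moreover have "cnt False n (- int k) + cnt True n (- int k) = fps_nth (i1 * del * sig ^ k) n"
      using tt_hh[OF k(3)] k by (simp add: cnt_fps hh_def mult.assoc flip: fps_add_nth)
    ultimately show "of_int (sgn (int k)) * (cnt False n (int k) + cnt True n (int k)) +
         of_int (sgn (- int k)) * (cnt False n (- int k) + cnt True n (- int k)) =
         fps_nth (i1 * (1 + del) * rho ^ k) n - fps_nth (i1 * del * sig ^ k) n"
      using k by simp
  qed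
  also have "\<dots> = fps_nth GG n"
    using geo[OF rho0, of "i1 * (1 + del)" n] geo[OF sig0, of "i1 * del" n]
    by (simp add: sum_subtractf GG_def)
  finally show ?thesis .
qed


definition QQ :: "real fps" where "QQ = (1 - XX) * (1 - 2 * XX^2 * uu)"

lemma key: "(2 * GG + i1) * QQ = 1"
proof -
  have i3: "inverse (1 - rho) * (1 - rho) = 1" by (rule inverse_mult_eq_1) (simp add: rho0)
  have i4: "inverse (1 - sig) * (1 - sig) = 1" by (rule inverse_mult_eq_1) (simp add: sig0)
  show ?thesis using i1 i2 i3 i4 uu_eq unfolding GG_def QQ_def del_def rho_def sig_def by algebra
qed

lemma QQ2: "QQ^2 = (1 - XX) * (1 - 2 * XX) * (2 * XX^2 + XX + 1)"
proof -
  have "QQ = (1 - XX) * VV" by (simp add: QQ_def VV_uu)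
  thus ?thesis using VV2 i1 unfolding RR_def by algebra
qed



lemma radius_bound:
  fixes f :: "real fps"
  assumes "\<And>n. \<bar>fps_nth f n\<bar> \<le> C * 2 ^ n"
  shows "fps_conv_radius f \<ge> ereal (1/2)"
  unfolding fps_conv_radius_def
proof (rule conv_radius_geI_ex')
  fix r :: real assume r: "0 < r" "ereal r < ereal (1/2)"
  hence r2: "r < 1/2" by simp
  have "summable (\<lambda>n. C * (2 * r) ^ n)"
    using r r2 by (intro summable_mult summable_geometric) auto
  thus "summable (\<lambda>n. fps_nth f n * of_real r ^ n)"
  proof (rule summable_comparison_test')
    fix n
    have "norm (fps_nth f n * of_real r ^ n) = \<bar>fps_nth f n\<bar> * r ^ n" using r by (simp add: abs_mult)
    also have "\<dots> \<le> C * 2 ^ n * r ^ n" using assms[of n] r by (intro mult_right_mono) auto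
    also have "\<dots> = C * (2 * r) ^ n" by (simp add: power_mult_distrib)
    finally show "norm (fps_nth f n * of_real r ^ n) \<le> C * (2 * r) ^ n" .
  qed
qed

lemma sgs_bound: "\<bar>sgs n\<bar> \<le> 2 ^ n"
proof -
  have "\<bar>sgs n\<bar> \<le> (\<Sum>xs\<in>L n. \<bar>of_int (sgn (sc xs))\<bar>)" unfolding sgs_def by (rule sum_abs)
  also have "\<dots> \<le> of_nat (card (L n)) * 1" by (rule sum_bounded_above) (auto simp: sgn_if)
  finally show ?thesis by (simp add: card_L)
qed

lemma i1_alt: "i1 = Abs_fps (\<lambda>n. 1)"
proof -
  have "i1 = inverse (inverse (Abs_fps (\<lambda>n. 1::real)))" by (simp add: i1_def fps_inverse_gp')
  thus ?thesis by simp
qed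

lemma rad_GG: "fps_conv_radius GG \<ge> ereal (1/2)"
  by (rule radius_bound[of _ 1]) (simp add: sgs_GG[symmetric] sgs_bound)

lemma rad_i1: "fps_conv_radius i1 \<ge> ereal (1/2)"
  by (rule radius_bound[of _ 1]) (simp add: i1_alt)

definition HH :: "real fps" where "HH = 2 * GG + i1"

lemma rad_HH: "fps_conv_radius HH \<ge> ereal (1/2)"
proof (rule radius_bound[of _ 3])
  fix n
  have a: "\<bar>sgs n\<bar> \<le> 2 ^ n" by (rule sgs_bound)
  have b: "(1::real) \<le> 2 ^ n" by simp
  have c: "fps_nth HH n = 2 * sgs n + 1" by (simp add: HH_def i1_alt sgs_GG numeral_fps_const)
  show "\<bar>fps_nth HH n\<bar> \<le> 3 * 2 ^ n" unfolding c abs_le_iff using a b unfolding abs_le_iff by linarith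
qed

lemma inf_mult: "fps_conv_radius f = \<infinity> \<Longrightarrow> fps_conv_radius g = \<infinity> \<Longrightarrow> fps_conv_radius (f * g :: real fps) = \<infinity>"
  using fps_conv_radius_mult[of f g] by simp
lemma inf_add: "fps_conv_radius f = \<infinity> \<Longrightarrow> fps_conv_radius g = \<infinity> \<Longrightarrow> fps_conv_radius (f + g :: real fps) = \<infinity>"
  using fps_conv_radius_add[of f g] by simp
lemma inf_diff: "fps_conv_radius f = \<infinity> \<Longrightarrow> fps_conv_radius g = \<infinity> \<Longrightarrow> fps_conv_radius (f - g :: real fps) = \<infinity>"
  using fps_conv_radius_diff[of f g] by simp
lemma ev_mult: "fps_conv_radius f = \<infinity> \<Longrightarrow> fps_conv_radius g = \<infinity> \<Longrightarrow> eval_fps (f * g :: real fps) z = eval_fps f z * eval_fps g z"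
  by (rule eval_fps_mult) auto
lemma ev_add: "fps_conv_radius f = \<infinity> \<Longrightarrow> fps_conv_radius g = \<infinity> \<Longrightarrow> eval_fps (f + g :: real fps) z = eval_fps f z + eval_fps g z"
  by (rule eval_fps_add) auto
lemma ev_diff: "fps_conv_radius f = \<infinity> \<Longrightarrow> fps_conv_radius g = \<infinity> \<Longrightarrow> eval_fps (f - g :: real fps) z = eval_fps f z - eval_fps g z"
  by (rule eval_fps_diff) auto

definition PP :: "real fps" where "PP = (1 - XX) * (1 - 2 * XX) * (2 * XX^2 + XX + 1)"

lemma rad_PP: "fps_conv_radius PP = \<infinity>"
  unfolding PP_def by (intro inf_mult inf_add inf_diff) simp_all

lemma ev_PP: "eval_fps PP t = (1 - t) * (1 - 2 * t) * (2 * t^2 + t + 1)"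
  unfolding PP_def by (simp add: ev_mult ev_add ev_diff inf_mult inf_add inf_diff)

lemma HH_PP: "HH^2 * PP = 1"
proof -
  have "HH^2 * PP = (HH * QQ)^2" using QQ2 by (simp add: PP_def power_mult_distrib)
  thus ?thesis using key by (simp add: HH_def)
qed


lemma sgs0: "sgs 0 = 0" by (simp add: sgs_def L_0)

lemma rad_lt: "ereal (1/2) \<le> fps_conv_radius f \<Longrightarrow> \<bar>t\<bar> < 1/2 \<Longrightarrow> ereal (norm (t::real)) < fps_conv_radius f"
  by (rule less_le_trans[of _ "ereal (1/2)"]) auto

lemma rad_HH2: "ereal (1/2) \<le> fps_conv_radius (HH^2)"
  using rad_HH fps_conv_radius_power[of HH 2] by (rule order.trans)

lemma hh_P: "\<bar>s\<bar> < 1/2 \<Longrightarrow> (eval_fps HH s)^2 * ((1 - s) * (1 - 2 * s) * (2 * s^2 + s + 1)) = 1"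
proof -
  assume s: "\<bar>s\<bar> < 1/2"
  have "eval_fps (HH^2 * PP) s = eval_fps (HH^2) s * eval_fps PP s"
    by (rule eval_fps_mult) (use rad_lt[OF rad_HH2 s] rad_PP in auto)
  also have "eval_fps (HH^2) s = (eval_fps HH s)^2" by (rule eval_fps_power) (rule rad_lt[OF rad_HH s])
  finally show ?thesis using HH_PP by (simp add: ev_PP)
qed

lemma HH_0: "eval_fps HH 0 = 1"
  by (simp add: eval_fps_at_0 HH_def i1_alt sgs_GG[symmetric] sgs0 numeral_fps_const)

lemma HH_pos: "\<bar>t\<bar> < 1/2 \<Longrightarrow> eval_fps HH t > 0"
proof (rule ccontr)
  assume t: "\<bar>t\<bar> < 1/2" and "\<not> eval_fps HH t > 0"
  hence le: "eval_fps HH t \<le> 0" by simp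
  have seg: "closed_segment 0 t \<subseteq> ball 0 (1/2)"
    by (rule closed_segment_subset) (use t in auto)
  have "ball (0::real) (1/2) \<subseteq> eball 0 (fps_conv_radius HH)"
  proof
    fix x :: real assume "x \<in> ball 0 (1/2)"
    hence "\<bar>x\<bar> < 1/2" by simp
    thus "x \<in> eball 0 (fps_conv_radius HH)" using rad_lt[OF rad_HH] by simp
  qed
  hence cont: "continuous_on (closed_segment 0 t) (eval_fps HH)"
    using seg continuous_on_eval_fps[of HH] by (meson continuous_on_subset order.trans)
  have "0 \<in> closed_segment (eval_fps HH 0) (eval_fps HH t)"
    using le HH_0 by (simp add: closed_segment_eq_real_ivl)
  then obtain x where x: "x \<in> closed_segment 0 t" "eval_fps HH x = 0"
    using IVT'_closed_segment_real[OF _ cont] by blast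
  have "\<bar>x\<bar> < 1/2" using x(1) seg by auto
  from hh_P[OF this] x(2) show False by simp
qed

lemma ev_i1: "\<bar>t\<bar> < 1 \<Longrightarrow> eval_fps i1 t = 1 / (1 - t)"
  by (simp add: eval_fps_def i1_alt suminf_geometric)

theorem mainTheorem1:
  shows "\<exists>r>0. \<forall>t::real. \<bar>t\<bar> < r \<longrightarrow>
    (\<lambda>n. Delta n * (2 * t) ^ n) sums
      (1/2 * (1 / sqrt ((1 - t) * (1 - 2 * t) * (2 * t^2 + t + 1))) - 1/2 * (1 / (1 - t)))"
proof (intro exI[of _ "1/2"] conjI allI impI)
  fix t :: real assume t: "\<bar>t\<bar> < 1/2"
  define P where "P = (1 - t) * (1 - 2 * t) * (2 * t^2 + t + 1)"
  define h where "h = eval_fps HH t"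
  have hP: "h^2 * P = 1" using hh_P[OF t] by (simp add: h_def P_def)
  have hpos: "h > 0" using HH_pos[OF t] by (simp add: h_def)
  have "P = 1 / h^2" using hP hpos by (simp add: field_simps)
  hence sq: "sqrt P = 1 / h" using hpos by (simp add: real_sqrt_divide)
  have r2G: "ereal (1/2) \<le> fps_conv_radius (2 * GG)"
    using fps_conv_radius_mult[of 2 GG] rad_GG by (simp add: min_def split: if_splits)
  have "h = eval_fps (2 * GG) t + eval_fps i1 t"
    unfolding h_def HH_def by (rule eval_fps_add) (use rad_lt[OF r2G t] rad_lt[OF rad_i1 t] in auto)
  also have "eval_fps (2 * GG) t = 2 * eval_fps GG t"
    by (subst eval_fps_mult) (use rad_lt[OF rad_GG t] in auto)
  also have "eval_fps i1 t = 1 / (1 - t)" using t by (simp add: ev_i1)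
  finally have hG: "h = 2 * eval_fps GG t + 1 / (1 - t)" .
  have "(\<lambda>n. fps_nth GG n * t ^ n) sums eval_fps GG t"
    by (rule sums_eval_fps) (rule rad_lt[OF rad_GG t])
  moreover have "(\<lambda>n. fps_nth GG n * t ^ n) = (\<lambda>n. Delta n * (2 * t) ^ n)"
    by (rule ext) (simp add: sgs_GG[symmetric] Delta_sgs[symmetric] power_mult_distrib)
  moreover have "eval_fps GG t = 1/2 * (1 / sqrt P) - 1/2 * (1 / (1 - t))"
  proof -
    have hs: "h = 1 / sqrt P" using sq hpos by simp
    have e: "eval_fps GG t = (h - 1/(1-t))/2" unfolding hG by simp
    show ?thesis unfolding e hs by (simp add: diff_divide_distrib mult.commute)
  qed
  ultimately show "(\<lambda>n. Delta n * (2 * t) ^ n) sums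
      (1/2 * (1 / sqrt ((1 - t) * (1 - 2 * t) * (2 * t^2 + t + 1))) - 1/2 * (1 / (1 - t)))"
    by (simp add: P_def)
qed simp


end
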